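(* Let $(X,d)$ be a compact metric space and $f\colon X\to X$ a continuous map. Assume that for some $k\in\mathbb N$ there are closed sets $Z_1,\dots,Z_k\subseteq X$ with $f(Z_i)\subseteq Z_i$ for each $i$, such that (1) $X=Z_1\cup\dots\cup Z_k$; (2) $Z_i\cap Z_j\ne\emptyset$ for all $i,j$; (3) $f|_{Z_i}\colon Z_i\to Z_i$ is strongly mixing for every $i$. Then $f$ is generically $\varepsilon$-chaotic for every $0<\varepsilon<\frac12\min_i\operatorname{diam} Z_i$.
   Context: A pair $(x,y)\in X^2$ is $\varepsilon$-scrambled if $\liminf_n d(f^n(x),f^n(y))=0$ and $\limsup_n d(f^n(x),f^n(y))>\varepsilon$; $f$ is generically $\varepsilon$-chaotic if the set of $\varepsilon$-scrambled pairs is residual in $X^2$. A map $g\colon Y\to Y$ is strongly mixing if for all nonempty open $U,V\subseteq Y$ there is $n_0$ with $g^n(U)\cap V\ne\emptyset$ for all $n\ge n_0$. *)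

theory Defs
  imports "HOL-Analysis.Analysis"
begin

definition residual_in :: "'a topology \<Rightarrow> 'a set \<Rightarrow> bool" where
  "residual_in T R \<longleftrightarrow>
     (\<exists>\<F>. countable \<F> \<and> (\<forall>U\<in>\<F>. openin T U \<and> T closure_of U = topspace T)
          \<and> topspace T \<inter> \<Inter>\<F> \<subseteq> R)"

definition scrambled_pair :: "('a::metric_space \<Rightarrow> 'a) \<Rightarrow> real \<Rightarrow> 'a \<Rightarrow> 'a \<Rightarrow> bool" where
  "scrambled_pair f eps x y \<longleftrightarrow>
     liminf (\<lambda>n. ereal (dist ((f ^^ n) x) ((f ^^ n) y))) = 0 \<and>
     limsup (\<lambda>n. ereal (dist ((f ^^ n) x) ((f ^^ n) y))) > ereal eps"

definition generically_chaotic :: "'a::metric_space set \<Rightarrow> ('a \<Rightarrow> 'a) \<Rightarrow> real \<Rightarrow> bool" where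
  "generically_chaotic X f eps \<longleftrightarrow>
     residual_in (top_of_set (X \<times> X)) {(x,y) \<in> X \<times> X. scrambled_pair f eps x y}"

definition strongly_mixing_on :: "'a::topological_space set \<Rightarrow> ('a \<Rightarrow> 'a) \<Rightarrow> bool" where
  "strongly_mixing_on Y g \<longleftrightarrow>
     (\<forall>U V. openin (top_of_set Y) U \<and> U \<noteq> {} \<and> openin (top_of_set Y) V \<and> V \<noteq> {} \<longrightarrow>
        (\<exists>n0. \<forall>n\<ge>n0. (g ^^ n) ` U \<inter> V \<noteq> {}))"

end

theory Submission
  imports Defs
begin

lemma mix1:
  assumes "strongly_mixing_on A f" "x0 \<in> A" "a \<in> A" "e > 0" "r > 0"
  shows "\<exists>n0. \<forall>n\<ge>n0. \<exists>x\<in>A. dist x x0 < e \<and> dist ((f ^^ n) x) a < r"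
proof -
  have "openin (top_of_set A) (A \<inter> ball x0 e)" "openin (top_of_set A) (A \<inter> ball a r)"
    by auto
  moreover have "A \<inter> ball x0 e \<noteq> {}" "A \<inter> ball a r \<noteq> {}" using assms by auto
  ultimately obtain n0 where "\<forall>n\<ge>n0. (f ^^ n) ` (A \<inter> ball x0 e) \<inter> (A \<inter> ball a r) \<noteq> {}"
    using assms(1) unfolding strongly_mixing_on_def by blast
  then show ?thesis
    by (intro exI[of _ n0]) (fastforce simp: dist_commute)
qed

lemma mix2:
  assumes "strongly_mixing_on A f" "x0 \<in> A" "a \<in> A"
    "strongly_mixing_on B f" "y0 \<in> B" "b \<in> B" "e > 0" "r > 0"
  shows "\<exists>n\<ge>m. \<exists>x\<in>A. \<exists>y\<in>B. dist x x0 < e \<and> dist y y0 < e \<and>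
           dist ((f ^^ n) x) a < r \<and> dist ((f ^^ n) y) b < r"
proof -
  obtain n0 where n0: "\<forall>n\<ge>n0. \<exists>x\<in>A. dist x x0 < e \<and> dist ((f ^^ n) x) a < r"
    using mix1[OF assms(1-3,7,8)] by blast
  obtain n1 where n1: "\<forall>n\<ge>n1. \<exists>x\<in>B. dist x y0 < e \<and> dist ((f ^^ n) x) b < r"
    using mix1[OF assms(4-8)] by blast
  define N where "N = max m (max n0 n1)"
  obtain x where "x \<in> A" "dist x x0 < e" "dist ((f ^^ N) x) a < r"
    using n0 N_def by (meson max.cobounded1 max.coboundedI2)
  moreover obtain y where "y \<in> B" "dist y y0 < e" "dist ((f ^^ N) y) b < r"
    using n1 N_def by (meson max.cobounded2 max.coboundedI2)
  moreover have "N \<ge> m" using N_def by auto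
  ultimately show ?thesis by blast
qed

lemma iter_cont:
  assumes "continuous_on X f" "f ` X \<subseteq> X"
  shows "continuous_on X (f ^^ n) \<and> (f ^^ n) ` X \<subseteq> X"
proof (induction n)
  case 0 then show ?case by (auto intro: continuous_on_id)
next
  case (Suc n)
  have "continuous_on X (\<lambda>x. (f ^^ n) (f x))"
    by (rule continuous_on_compose2[OF _ assms(1) assms(2)]) (use Suc in blast)
  moreover have "(\<lambda>x. (f ^^ n) (f x)) ` X \<subseteq> X" using Suc assms by auto
  ultimately show ?case by (simp del: funpow.simps add: funpow_Suc_right o_def)
qed

lemma open_pairs:
  assumes "continuous_on X f" "f ` X \<subseteq> X" "open T"
  shows "openin (top_of_set (X \<times> X)) ((X \<times> X) \<inter> (\<lambda>p. dist ((f ^^ n) (fst p)) ((f ^^ n) (snd p))) -` T)"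
proof (rule continuous_openin_preimage_gen[OF _ assms(3)])
  have c: "continuous_on X (f ^^ n)" using iter_cont[OF assms(1,2)] by blast
  show "continuous_on (X \<times> X) (\<lambda>p. dist ((f ^^ n) (fst p)) ((f ^^ n) (snd p)))"
    by (intro continuous_intros continuous_on_compose2[OF c]) auto
qed

lemma dense_from:
  fixes X :: "'a::metric_space set"
  assumes "A \<subseteq> X \<times> X"
    and "\<And>x0 y0 e. x0 \<in> X \<Longrightarrow> y0 \<in> X \<Longrightarrow> e > 0 \<Longrightarrow>
           \<exists>x y. (x, y) \<in> A \<and> dist x x0 < e \<and> dist y y0 < e"
  shows "top_of_set (X \<times> X) closure_of A = topspace (top_of_set (X \<times> X))"
proof -
  have "X \<times> X \<subseteq> closure A"
  proof (clarsimp)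
    fix x0 y0 assume h: "x0 \<in> X" "y0 \<in> X"
    show "(x0, y0) \<in> closure A"
      unfolding closure_approachable
    proof (intro allI impI)
      fix e :: real assume "e > 0"
      then obtain x y where xy: "(x, y) \<in> A" "dist x x0 < e/2" "dist y y0 < e/2"
        using assms(2)[OF h, of "e/2"] by auto
      have "dist (x, y) (x0, y0) \<le> dist x x0 + dist y y0"
        unfolding dist_Pair_Pair by (rule sqrt_sum_squares_le_sum) auto
      then show "\<exists>p\<in>A. dist p (x0, y0) < e" using xy by (intro bexI[of _ "(x,y)"]) auto
    qed
  qed
  then show ?thesis
    using assms(1) by (auto simp: closure_of_subtopology Int_absorb1)
qed

theorem lemma33:
  fixes X :: "'a::metric_space set" and f :: "'a \<Rightarrow> 'a"
    and k :: nat and Z :: "nat \<Rightarrow> 'a set" and eps :: real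
  assumes "compact X"
    and "continuous_on X f" and "f ` X \<subseteq> X"
    and "k \<ge> 1"
    and "\<And>i. i < k \<Longrightarrow> closed (Z i)"
    and "\<And>i. i < k \<Longrightarrow> f ` Z i \<subseteq> Z i"
    and "X = (\<Union>i<k. Z i)"
    and "\<And>i j. i < k \<Longrightarrow> j < k \<Longrightarrow> Z i \<inter> Z j \<noteq> {}"
    and "\<And>i. i < k \<Longrightarrow> strongly_mixing_on (Z i) f"
    and "0 < eps"
    and "eps < Min ((\<lambda>i. diameter (Z i)) ` {..<k}) / 2"
  shows "generically_chaotic X f eps"
proof -
  define \<delta> where "\<delta> = Min ((\<lambda>i. diameter (Z i)) ` {..<k}) / 2"
  define eps' where "eps' = (eps + \<delta>) / 2"
  have eps': "eps < eps'" "eps' < \<delta>" using assms(11) \<delta>_def eps'_def by auto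
  have diam: "diameter (Z i) > 2 * eps'" if "i < k" for i
  proof -
    have "Min ((\<lambda>i. diameter (Z i)) ` {..<k}) \<le> diameter (Z i)"
      using that by (intro Min_le) auto
    then show ?thesis using eps' \<delta>_def by auto
  qed
  have ZX: "Z i \<subseteq> X" if "i < k" for i using that assms(7) by auto
  have Zc: "compact (Z i)" if "i < k" for i
    using compact_Int_closed[OF assms(1) assms(5)[OF that]] ZX[OF that]
    by (simp add: Int_absorb1)
  have Zne: "Z i \<noteq> {}" if "i < k" for i using assms(8)[OF that that] by auto
  have inZ: "\<exists>i<k. x \<in> Z i" if "x \<in> X" for x using that assms(7) by auto
  have near: "\<exists>n\<ge>m. \<exists>x\<in>X. \<exists>y\<in>X. dist x x0 < e \<and> dist y y0 < e \<and>
       dist ((f ^^ n) x) ((f ^^ n) y) < 1 / Suc m"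
    if hx: "x0 \<in> X" "y0 \<in> X" "e > 0" for x0 y0 e m
  proof -
    obtain i j where ij: "i < k" "j < k" "x0 \<in> Z i" "y0 \<in> Z j" using inZ hx by meson
    obtain p where p: "p \<in> Z i" "p \<in> Z j" using assms(8)[OF ij(1,2)] by auto
    obtain n x y where n: "n \<ge> m" "x \<in> Z i" "y \<in> Z j" "dist x x0 < e" "dist y y0 < e"
      "dist ((f ^^ n) x) p < 1 / (2 * Suc m)" "dist ((f ^^ n) y) p < 1 / (2 * Suc m)"
      using mix2[OF assms(9)[OF ij(1)] ij(3) p(1) assms(9)[OF ij(2)] ij(4) p(2) hx(3),
          of "1 / (2 * Suc m)" m] by auto
    have "dist ((f ^^ n) x) ((f ^^ n) y) \<le> dist ((f ^^ n) x) p + dist ((f ^^ n) y) p"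
      by (rule dist_triangle2)
    also have "\<dots> < 1 / (2 * Suc m) + 1 / (2 * Suc m)" using n(6,7) by linarith
    also have "\<dots> = 1 / Suc m" by (simp add: field_simps)
    finally show ?thesis using n ZX ij by blast
  qed
  have far: "\<exists>n\<ge>m. \<exists>x\<in>X. \<exists>y\<in>X. dist x x0 < e \<and> dist y y0 < e \<and>
       dist ((f ^^ n) x) ((f ^^ n) y) > eps'"
    if hx: "x0 \<in> X" "y0 \<in> X" "e > 0" for x0 y0 e m
  proof -
    obtain i j where ij: "i < k" "j < k" "x0 \<in> Z i" "y0 \<in> Z j" using inZ hx by meson
    obtain c where c: "c \<in> Z i" "c \<in> Z j" using assms(8)[OF ij(1,2)] by auto
    obtain a1 a2 where a: "a1 \<in> Z i" "a2 \<in> Z i" "dist a1 a2 = diameter (Z i)"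
      using diameter_compact_attained[OF Zc[OF ij(1)] Zne[OF ij(1)]] by auto
    have "dist a1 a2 \<le> dist a1 c + dist a2 c" by (rule dist_triangle2)
    then have "dist a1 c > eps' \<or> dist a2 c > eps'" using a diam[OF ij(1)] by linarith
    then obtain a where a': "a \<in> Z i" "dist a c > eps'"
      using a by blast
    define r where "r = (dist a c - eps') / 2"
    have r: "r > 0" using a' r_def by auto
    obtain n x y where n: "n \<ge> m" "x \<in> Z i" "y \<in> Z j" "dist x x0 < e" "dist y y0 < e"
      "dist ((f ^^ n) x) a < r" "dist ((f ^^ n) y) c < r"
      using mix2[OF assms(9)[OF ij(1)] ij(3) a'(1) assms(9)[OF ij(2)] ij(4) c(2) hx(3) r, of m]
      by auto
    have "dist a c \<le> dist ((f ^^ n) x) a + dist ((f ^^ n) x) ((f ^^ n) y) + dist ((f ^^ n) y) c"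
      using dist_triangle[of a c "(f ^^ n) x"] dist_triangle[of "(f ^^ n) x" c "(f ^^ n) y"]
      by (simp add: dist_commute)
    then have "dist ((f ^^ n) x) ((f ^^ n) y) > eps'" using n(6,7) r_def by auto
    then show ?thesis using n ZX ij by blast
  qed
  define D where "D = (\<lambda>n p. dist ((f ^^ n) (fst p)) ((f ^^ n) (snd p)))"
  define A where "A = (\<lambda>m. \<Union>n\<in>{m..}. (X \<times> X) \<inter> D n -` {..<1 / Suc m})"
  define B where "B = (\<lambda>m. \<Union>n\<in>{m..}. (X \<times> X) \<inter> D n -` {eps'<..})"
  have opA: "openin (top_of_set (X \<times> X)) (A m)" for m
    unfolding A_def D_def by (intro openin_Union) (auto intro!: open_pairs assms(2,3))
  have opB: "openin (top_of_set (X \<times> X)) (B m)" for m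
    unfolding B_def D_def by (intro openin_Union) (auto intro!: open_pairs assms(2,3))
  have dA: "top_of_set (X \<times> X) closure_of A m = topspace (top_of_set (X \<times> X))" for m
  proof (rule dense_from)
    show "A m \<subseteq> X \<times> X" unfolding A_def by auto
    fix x0 y0 and e :: real assume "x0 \<in> X" "y0 \<in> X" "e > 0"
    then show "\<exists>x y. (x, y) \<in> A m \<and> dist x x0 < e \<and> dist y y0 < e"
      using near[of x0 y0 e m] unfolding A_def D_def by fastforce
  qed
  have dB: "top_of_set (X \<times> X) closure_of B m = topspace (top_of_set (X \<times> X))" for m
  proof (rule dense_from)
    show "B m \<subseteq> X \<times> X" unfolding B_def by auto
    fix x0 y0 and e :: real assume "x0 \<in> X" "y0 \<in> X" "e > 0"
    then show "\<exists>x y. (x, y) \<in> B m \<and> dist x x0 < e \<and> dist y y0 < e"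
      using far[of x0 y0 e m] unfolding B_def D_def by fastforce
  qed
  have scr: "scrambled_pair f eps x y"
    if "x \<in> X" "y \<in> X" "\<forall>m. (x, y) \<in> A m" "\<forall>m. (x, y) \<in> B m" for x y
  proof -
    define u where "u = (\<lambda>n. ereal (dist ((f ^^ n) x) ((f ^^ n) y)))"
    have Af: "\<exists>n\<ge>m. dist ((f ^^ n) x) ((f ^^ n) y) < 1 / Suc m" for m
      using that(3) unfolding A_def D_def by auto
    have Bf: "\<exists>n\<ge>m. dist ((f ^^ n) x) ((f ^^ n) y) > eps'" for m
      using that(4) unfolding B_def D_def by auto
    have l1: "liminf u \<ge> 0"
      by (rule Liminf_bounded) (auto simp: u_def)
    have l2: "liminf u \<le> 0"
    proof (rule ereal_le_epsilon2)
      fix e :: real assume e: "e > 0"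
      show "liminf u \<le> 0 + ereal e"
      proof (rule ccontr)
        assume "\<not> ?thesis"
        then have "ereal e < liminf u" by auto
        then have "eventually (\<lambda>n. ereal e < u n) sequentially"
          using le_Liminf_iff[of "liminf u" sequentially u] by auto
        then obtain N where N: "\<And>n. n \<ge> N \<Longrightarrow> e < dist ((f ^^ n) x) ((f ^^ n) y)"
          unfolding eventually_sequentially u_def by auto
        obtain M where M: "1 / Suc M < e" using e
          by (metis nat_approx_posE)
        obtain n where n: "n \<ge> max M N" "dist ((f ^^ n) x) ((f ^^ n) y) < 1 / Suc (max M N)"
          using Af by blast
        have "1 / real (Suc (max M N)) \<le> 1 / Suc M"
          by (intro divide_left_mono) auto
        then show False using N[of n] n M by auto
      qed
    qed
    have l3: "limsup u > ereal eps"
    proof (rule ccontr)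
      assume "\<not> ?thesis"
      then have "limsup u \<le> ereal eps" by auto
      then have "eventually (\<lambda>n. ereal eps' > u n) sequentially"
        using Limsup_le_iff[of sequentially u "ereal eps"] eps' by auto
      then obtain N where N: "\<And>n. n \<ge> N \<Longrightarrow> eps' > dist ((f ^^ n) x) ((f ^^ n) y)"
        unfolding eventually_sequentially u_def by auto
      then show False using Bf[of N] by force
    qed
    show ?thesis unfolding scrambled_pair_def using l1 l2 l3 u_def by auto
  qed
  show ?thesis
    unfolding generically_chaotic_def residual_in_def
  proof (intro exI[of _ "range A \<union> range B"] conjI)
    show "countable (range A \<union> range B)" by auto
    show "\<forall>U\<in>range A \<union> range B. openin (top_of_set (X \<times> X)) U \<and>
        top_of_set (X \<times> X) closure_of U = topspace (top_of_set (X \<times> X))"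
      using opA opB dA dB by auto
    show "topspace (top_of_set (X \<times> X)) \<inter> \<Inter> (range A \<union> range B)
        \<subseteq> {(x, y). (x, y) \<in> X \<times> X \<and> scrambled_pair f eps x y}"
      using scr by auto
  qed
qed

end
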